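(* Let $\mathcal{H}_A\cong\mathcal{H}_B\cong\mathbb{C}^d$ and let $|\Psi\rangle_{AB}$ be a pure state with Schmidt probabilities $p_1,\dots,p_d$ (i.e. $|\Psi\rangle=\sum_i\sqrt{p_i}|\psi_i\rangle_A|\phi_i\rangle_B$ for orthonormal bases $\{\psi_i\},\{\phi_i\}$), and $\Lambda=\mathrm{diag}(p_1,\dots,p_d)$. Let $t\ge2$, $\pi,\sigma\in S_t$, $\beta=\sigma\pi^{-1}$, and let $\xi_1,\dots,\xi_k$ be the cycle lengths of $\beta$ ($k=\#\mathrm{cycles}(\beta)$). Then $$\mathrm{Tr}[(W^A_\pi\otimes W^B_\sigma)\Psi^{\otimes t}]=\prod_{l=1}^{k}\mathrm{Tr}[\Lambda^{\xi_l}]=:\chi(\Psi,\beta),$$ and moreover $d_0(\Psi)^{k-t}\le\chi(\Psi,\beta)\le d_t(\Psi)^{k-t}$, where $d_\alpha(\Psi)=2^{S_\alpha(\Psi)}$.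
   Context: $\Psi=|\Psi\rangle\langle\Psi|$. $W_\pi$ is the operator permuting the $t$ tensor factors; $(\mathcal{H}_A\otimes\mathcal{H}_B)^{\otimes t}\cong\mathcal{H}_A^{\otimes t}\otimes\mathcal{H}_B^{\otimes t}$. The Rényi entropies of the Schmidt distribution are $S_\alpha(\Psi)=\frac{1}{1-\alpha}\log_2\sum_i p_i^\alpha$ for $\alpha>0$, $\alpha\neq1$, and $S_0(\Psi)=\log_2$ of the Schmidt rank (number of nonzero $p_i$), so $d_0(\Psi)$ is the Schmidt rank. *)

theory Defs
  imports "HOL-Analysis.Analysis" "HOL-Combinatorics.Combinatorics"
begin

text \<open>Computational basis of (C^d)^{\<otimes>t}: extensional functions {0..<t} \<rightarrow> {0..<d}.\<close>
definition idx :: "nat \<Rightarrow> nat \<Rightarrow> (nat \<Rightarrow> nat) set" where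
  "idx t d = PiE {0..<t} (\<lambda>_. {0..<d})"

text \<open>Matrix entry of the permutation operator W_pi on (C^d)^{\<otimes>t}:
  W_pi |i_1 ... i_t> = |i_{pi^-1 1} ... i_{pi^-1 t}>, i.e. <x|W_pi|y> = 1 iff y = x o pi.\<close>
definition perm_op :: "nat \<Rightarrow> (nat \<Rightarrow> nat) \<Rightarrow> (nat \<Rightarrow> nat) \<Rightarrow> (nat \<Rightarrow> nat) \<Rightarrow> complex" where
  "perm_op t \<pi> x y = (if y = restrict (x \<circ> \<pi>) {0..<t} then 1 else 0)"

text \<open>Matrix entry of Psi^{\<otimes>t} (Psi = |psi><psi|, psi with coefficients psi a b in the
  product basis of C^d \<otimes> C^d), using (H_A \<otimes> H_B)^{\<otimes>t} = H_A^{\<otimes>t} \<otimes> H_B^{\<otimes>t}.\<close>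
definition proj_tensor_power ::
  "nat \<Rightarrow> (nat \<Rightarrow> nat \<Rightarrow> complex) \<Rightarrow> (nat \<Rightarrow> nat) \<times> (nat \<Rightarrow> nat) \<Rightarrow> (nat \<Rightarrow> nat) \<times> (nat \<Rightarrow> nat) \<Rightarrow> complex" where
  "proj_tensor_power t \<psi> x y =
     (\<Prod>j<t. \<psi> (fst x j) (snd x j) * cnj (\<psi> (fst y j) (snd y j)))"

text \<open>Tr[(W^A_pi \<otimes> W^B_sigma) Psi^{\<otimes>t}].\<close>
definition trace_perm_proj ::
  "nat \<Rightarrow> nat \<Rightarrow> (nat \<Rightarrow> nat) \<Rightarrow> (nat \<Rightarrow> nat) \<Rightarrow> (nat \<Rightarrow> nat \<Rightarrow> complex) \<Rightarrow> complex" where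
  "trace_perm_proj d t \<pi> \<sigma> \<psi> =
     (\<Sum>x\<in>idx t d \<times> idx t d. \<Sum>y\<in>idx t d \<times> idx t d.
        perm_op t \<pi> (fst x) (fst y) * perm_op t \<sigma> (snd x) (snd y) * proj_tensor_power t \<psi> y x)"

text \<open>The cycles of a permutation beta of {0..<t} (fixed points are cycles of length 1).\<close>
definition perm_cycles :: "nat \<Rightarrow> (nat \<Rightarrow> nat) \<Rightarrow> nat set set" where
  "perm_cycles t \<beta> = (\<lambda>x. orbit \<beta> x) ` {0..<t}"

definition chi :: "nat \<Rightarrow> (nat \<Rightarrow> real) \<Rightarrow> nat \<Rightarrow> (nat \<Rightarrow> nat) \<Rightarrow> real" where
  "chi d p t \<beta> = (\<Prod>c\<in>perm_cycles t \<beta>. \<Sum>i<d. p i ^ card c)"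

definition renyi :: "nat \<Rightarrow> (nat \<Rightarrow> real) \<Rightarrow> real \<Rightarrow> real" where
  "renyi d p \<alpha> = (if \<alpha> = 0 then log 2 (real (card {i\<in>{0..<d}. p i \<noteq> 0}))
                   else (1 / (1 - \<alpha>)) * log 2 (\<Sum>i<d. p i powr \<alpha>))"

definition d_alpha :: "nat \<Rightarrow> (nat \<Rightarrow> real) \<Rightarrow> real \<Rightarrow> real" where
  "d_alpha d p \<alpha> = 2 powr renyi d p \<alpha>"

end

theory Submission imports Defs begin


locale permloc =
  fixes \<beta> :: "nat \<Rightarrow> nat" and t :: nat
  assumes bp: "\<beta> permutes {..<t}"
begin

lemma perm: "permutation \<beta>"
  using bp permutation_permutes by blast

lemma self_in: "x \<in> orbit \<beta> x"
  by (rule permutation_self_in_orbit[OF perm])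

lemma orb_sub: "x < t \<Longrightarrow> orbit \<beta> x \<subseteq> {..<t}"
  using permutes_orbit_subset[OF bp] by auto

lemma orb_eq: "y \<in> orbit \<beta> x \<Longrightarrow> orbit \<beta> y = orbit \<beta> x"
  by (meson cyclic_on_orbit' orbit_cyclic_eq3 perm)

lemma orb_fin: "finite (orbit \<beta> x)"
  by (rule finite_orbit[OF self_in])

lemma orb_step: "orbit \<beta> (\<beta> x) = orbit \<beta> x"
  by (rule permutation_orbit_step[OF perm])

lemma beta_lt: "j < t \<Longrightarrow> \<beta> j < t"
  using bp permutes_in_image by fastforce

lemma fiber: "x < t \<Longrightarrow> {j. j \<in> {..<t} \<and> orbit \<beta> j = orbit \<beta> x} = orbit \<beta> x"
  using orb_sub self_in orb_eq by blast

lemma const_orbit: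
  assumes "\<forall>j<t. k (\<beta> j) = k j" "x < t" "y \<in> orbit \<beta> x"
  shows "k y = k x"
  using assms(3)
proof induction
  case base then show ?case using assms by simp
next
  case (step y)
  then have "y < t" using orb_sub[OF assms(2)] by auto
  then show ?case using assms step by simp
qed

lemma sum_card: "(\<Sum>c\<in>perm_cycles t \<beta>. card c) = t"
proof -
  have "t = (\<Sum>j\<in>{..<t}. (1::nat))" by simp
  also have "\<dots> = (\<Sum>c\<in>orbit \<beta> ` {..<t}. \<Sum>j\<in>{j. j \<in> {..<t} \<and> orbit \<beta> j = c}. 1)"
    by (rule sum.image_gen) simp
  also have "\<dots> = (\<Sum>c\<in>orbit \<beta> ` {..<t}. card c)"
    by (rule sum.cong) (auto simp: fiber[simplified])
  finally show ?thesis by (simp add: perm_cycles_def atLeast0LessThan)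
qed

lemma cycles_sum:
  fixes p :: "nat \<Rightarrow> real"
  shows "(\<Sum>k\<in>PiE {..<t} (\<lambda>_. {..<d}). if \<forall>j<t. k (\<beta> j) = k j then \<Prod>j<t. p (k j) else 0)
    = (\<Prod>c\<in>perm_cycles t \<beta>. \<Sum>i<d. p i ^ card c)"
proof -
  define C where "C = perm_cycles t \<beta>"
  have C: "C = orbit \<beta> ` {..<t}" by (simp add: C_def perm_cycles_def atLeast0LessThan)
  have finC: "finite C" by (simp add: C)
  define K where "K = {k \<in> PiE {..<t} (\<lambda>_. {..<d}). \<forall>j<t. k (\<beta> j) = k j}"
  define gm where "gm = (\<lambda>k::nat\<Rightarrow>nat. restrict (\<lambda>c. k (SOME y. y \<in> c)) C)"
  define hm where "hm = (\<lambda>f::nat set\<Rightarrow>nat. restrict (\<lambda>j. f (orbit \<beta> j)) {..<t})"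
  have some: "(SOME y. y \<in> orbit \<beta> x) \<in> orbit \<beta> x" for x
    using self_in by (meson someI)
  have lhs: "(\<Sum>k\<in>PiE {..<t} (\<lambda>_. {..<d}). if \<forall>j<t. k (\<beta> j) = k j then \<Prod>j<t. p (k j) else 0)
     = (\<Sum>k\<in>K. \<Prod>j<t. p (k j))"
    unfolding K_def by (rule sum.inter_filter[symmetric]) (simp add: finite_PiE)
  have rhs: "(\<Prod>c\<in>C. \<Sum>i<d. p i ^ card c) = (\<Sum>f\<in>PiE C (\<lambda>_. {..<d}). \<Prod>c\<in>C. p (f c) ^ card c)"
    by (rule prod_sum_PiE) (auto simp: finC)
  have "(\<Sum>k\<in>K. \<Prod>j<t. p (k j)) = (\<Sum>f\<in>PiE C (\<lambda>_. {..<d}). \<Prod>c\<in>C. p (f c) ^ card c)"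
  proof (rule sum.reindex_bij_witness[where j = gm and i = hm])
    fix a assume a: "a \<in> K"
    then have aP: "a \<in> PiE {..<t} (\<lambda>_. {..<d})" and ac: "\<forall>j<t. a (\<beta> j) = a j" by (auto simp: K_def)
    have av: "a (SOME y. y \<in> orbit \<beta> x) = a x" if "x < t" for x
      using const_orbit[OF ac that some] .
    show "hm (gm a) = a"
    proof
      fix x show "hm (gm a) x = a x"
        using aP av by (cases "x < t") (auto simp: hm_def gm_def C PiE_def extensional_def)
    qed
    show "gm a \<in> PiE C (\<lambda>_. {..<d})"
      using aP av by (auto simp: gm_def C)
    show "(\<Prod>c\<in>C. p (gm a c) ^ card c) = (\<Prod>j<t. p (a j))"
    proof -
      have "(\<Prod>j<t. p (a j)) = (\<Prod>c\<in>orbit \<beta> ` {..<t}. \<Prod>j\<in>{j. j \<in> {..<t} \<and> orbit \<beta> j = c}. p (a j))"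
        by (rule prod.image_gen) simp
      also have "\<dots> = (\<Prod>c\<in>C. p (gm a c) ^ card c)"
        unfolding C
      proof (rule prod.cong[OF refl])
        fix c assume "c \<in> orbit \<beta> ` {..<t}"
        then obtain x where x: "x < t" "c = orbit \<beta> x" by auto
        have "(\<Prod>j\<in>{j. j \<in> {..<t} \<and> orbit \<beta> j = c}. p (a j)) = (\<Prod>j\<in>orbit \<beta> x. p (a x))"
          using x fiber[OF x(1)] const_orbit[OF ac x(1)] by (intro prod.cong) auto
        also have "\<dots> = p (a x) ^ card c" using x by simp
        also have "a x = gm a c" using x av by (auto simp: gm_def C)
        finally show "(\<Prod>j\<in>{j. j \<in> {..<t} \<and> orbit \<beta> j = c}. p (a j)) = p (gm a c) ^ card c" .
      qed
      finally show ?thesis by simp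
    qed
  next
    fix b assume b: "b \<in> PiE C (\<lambda>_. {..<d})"
    show "gm (hm b) = b"
    proof
      fix c show "gm (hm b) c = b c"
      proof (cases "c \<in> C")
        case True
        then obtain x where x: "x < t" "c = orbit \<beta> x" by (auto simp: C)
        have "(SOME y. y \<in> c) < t" using some x orb_sub by blast
        moreover have "orbit \<beta> (SOME y. y \<in> c) = c" using some x orb_eq by blast
        ultimately show ?thesis using True by (simp add: gm_def hm_def)
      next
        case False then show ?thesis using b by (simp add: gm_def PiE_def extensional_def)
      qed
    qed
    show "hm b \<in> K"
      using b by (auto simp: K_def hm_def C beta_lt orb_step)
  qed
  then show ?thesis using lhs rhs C_def by simp
qed

end


lemma prod_ind:
  "(\<Prod>j<(t::nat). if P j then 1 else 0 :: complex) = (if \<forall>j<t. P j then 1 else 0)"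
  by (induction t) (auto simp: less_Suc_eq)

lemma orth_sum:
  fixes u :: "nat \<Rightarrow> nat \<Rightarrow> complex" and t :: nat
  assumes on: "\<And>i j. i < d \<Longrightarrow> j < d \<Longrightarrow> (\<Sum>a<d. cnj (u i a) * u j a) = (if i = j then 1 else 0)"
    and pp: "\<pi> permutes {..<t}" and i: "i \<in> PiE {..<t} (\<lambda>_. {..<d})" and k: "k \<in> PiE {..<t} (\<lambda>_. {..<d})"
  shows "(\<Sum>x\<in>PiE {..<t} (\<lambda>_. {..<d}). \<Prod>j<t. u (i j) (x (\<pi> j)) * cnj (u (k j) (x j)))
     = (if \<forall>j<t. k j = i (inv \<pi> j) then 1 else 0)"
proof -
  have bi: "bij_betw (inv \<pi>) {..<t} {..<t}"
    using permutes_inv[OF pp] permutes_imp_bij by blast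
  have ipi: "inv \<pi> j < t" if "j < t" for j
    using permutes_inv[OF pp] that permutes_in_image by fastforce
  have re: "(\<Prod>j<t. u (i j) (x (\<pi> j)) * cnj (u (k j) (x j)))
      = (\<Prod>j<t. u (i (inv \<pi> j)) (x j) * cnj (u (k j) (x j)))" for x
  proof -
    have "(\<Prod>j<t. u (i j) (x (\<pi> j))) = (\<Prod>j<t. u (i (inv \<pi> j)) (x (\<pi> (inv \<pi> j))))"
      using prod.reindex_bij_betw[OF bi, of "\<lambda>j. u (i j) (x (\<pi> j))"] by simp
    also have "\<dots> = (\<Prod>j<t. u (i (inv \<pi> j)) (x j))"
      using permutes_inverses(1)[OF pp] by simp
    finally show ?thesis by (simp add: prod.distrib)
  qed
  have "(\<Sum>x\<in>PiE {..<t} (\<lambda>_. {..<d}). \<Prod>j<t. u (i (inv \<pi> j)) (x j) * cnj (u (k j) (x j)))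
     = (\<Prod>j<t. \<Sum>a<d. u (i (inv \<pi> j)) a * cnj (u (k j) a))"
    by (rule prod_sum_PiE[symmetric]) auto
  also have "\<dots> = (\<Prod>j<t. if k j = i (inv \<pi> j) then 1 else 0)"
  proof (rule prod.cong[OF refl])
    fix j assume j: "j \<in> {..<t}"
    have "k j < d" "i (inv \<pi> j) < d" using i k j ipi by auto
    then show "(\<Sum>a<d. u (i (inv \<pi> j)) a * cnj (u (k j) a)) = (if k j = i (inv \<pi> j) then 1 else 0)"
      using on[of "k j" "i (inv \<pi> j)"] by (simp add: mult.commute)
  qed
  finally show ?thesis by (simp add: re prod_ind)
qed



lemma supp_facts:
  fixes p :: "nat \<Rightarrow> real"
  assumes pn: "\<And>i. i < d \<Longrightarrow> p i \<ge> 0" and ps: "(\<Sum>i<d. p i) = 1"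
    and S_def: "S = {i\<in>{0..<d}. p i \<noteq> 0}"
  shows "finite S" "S \<noteq> {}" "(\<Sum>i\<in>S. p i) = 1" "\<forall>i\<in>S. p i > 0"
    "\<forall>n\<ge>1. (\<Sum>i<d. p i ^ n) = (\<Sum>i\<in>S. p i ^ n)"
proof -
  show "finite S" by (simp add: S_def)
  have "(\<Sum>i<d. p i) = (\<Sum>i\<in>S. p i)"
    by (rule sum.mono_neutral_right) (auto simp: S_def)
  then show s1: "(\<Sum>i\<in>S. p i) = 1" using ps by simp
  then show "S \<noteq> {}" by auto
  show "\<forall>i\<in>S. p i > 0" using pn by (force simp: S_def)
  show "\<forall>n\<ge>1. (\<Sum>i<d. p i ^ n) = (\<Sum>i\<in>S. p i ^ n)"
    by (auto intro!: sum.mono_neutral_right simp: S_def)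
qed

lemma lower_ineq:
  fixes p :: "nat \<Rightarrow> real"
  assumes pn: "\<And>i. i < d \<Longrightarrow> p i \<ge> 0" and ps: "(\<Sum>i<d. p i) = 1" and n: "n \<ge> 1"
  shows "real (card {i\<in>{0..<d}. p i \<noteq> 0}) powr (1 - real n) \<le> (\<Sum>i<d. p i ^ n)"
proof -
  define S where "S = {i\<in>{0..<d}. p i \<noteq> 0}"
  note F = supp_facts[OF pn ps S_def]
  have F4: "\<And>i. i\<in>S \<Longrightarrow> p i > 0" using F(4) by blast
  have F5: "\<And>n. n\<ge>1 \<Longrightarrow> (\<Sum>i<d. p i ^ n) = (\<Sum>i\<in>S. p i ^ n)" using F(5) by blast
  define r where "r = real (card S)"
  have r: "r > 0" using F(1,2) by (simp add: r_def card_gt_0_iff)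
  have "((\<Sum>i\<in>S. (1/r) *\<^sub>R p i)) powr real n \<le> (\<Sum>i\<in>S. (1/r) * p i powr real n)"
    by (rule convex_on_sum[OF F(1,2) powr_convex]) (use n F r in \<open>auto simp: r_def\<close>)
  moreover have "(\<Sum>i\<in>S. (1/r) *\<^sub>R p i) = 1/r"
    using F(3) by (simp add: sum_divide_distrib[symmetric])
  moreover have "(\<Sum>i\<in>S. (1/r) * p i powr real n) = (1/r) * (\<Sum>i\<in>S. p i ^ n)"
    using F4 by (simp add: sum_distrib_left powr_realpow)
  ultimately have "(1/r) powr real n \<le> (1/r) * (\<Sum>i\<in>S. p i ^ n)" by simp
  then have "r * (1/r) powr real n \<le> (\<Sum>i\<in>S. p i ^ n)"
    using r by (simp add: field_simps)
  moreover have "r * (1/r) powr real n = r powr (1 - real n)"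
    using r by (simp add: powr_diff powr_divide field_simps)
  ultimately show ?thesis using F5[OF n] by (simp add: S_def r_def)
qed

lemma At_pos:
  fixes p :: "nat \<Rightarrow> real"
  assumes pn: "\<And>i. i < d \<Longrightarrow> p i \<ge> 0" and ps: "(\<Sum>i<d. p i) = 1" and n: "n \<ge> 1"
  shows "(\<Sum>i<d. p i ^ n) > 0"
proof -
  define S where "S = {i\<in>{0..<d}. p i \<noteq> 0}"
  note F = supp_facts[OF pn ps S_def]
  have F4: "\<And>i. i\<in>S \<Longrightarrow> p i > 0" using F(4) by blast
  have F5: "\<And>n. n\<ge>1 \<Longrightarrow> (\<Sum>i<d. p i ^ n) = (\<Sum>i\<in>S. p i ^ n)" using F(5) by blast
  show ?thesis using F5[OF n] F(1,2) F4 by (simp add: sum_pos)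
qed

lemma upper_ineq:
  fixes p :: "nat \<Rightarrow> real"
  assumes pn: "\<And>i. i < d \<Longrightarrow> p i \<ge> 0" and ps: "(\<Sum>i<d. p i) = 1" and n: "n \<ge> 1" "n \<le> t" and t: "t \<ge> 2"
  shows "(\<Sum>i<d. p i ^ n) \<le> (\<Sum>i<d. p i ^ t) powr ((real n - 1) / (real t - 1))"
proof (cases "n = 1")
  case True
  then show ?thesis using ps At_pos[OF pn ps, of t] t by simp
next
  case False
  define S where "S = {i\<in>{0..<d}. p i \<noteq> 0}"
  note F = supp_facts[OF pn ps S_def]
  have F4: "\<And>i. i\<in>S \<Longrightarrow> p i > 0" using F(4) by blast
  have F5: "\<And>n. n\<ge>1 \<Longrightarrow> (\<Sum>i<d. p i ^ n) = (\<Sum>i\<in>S. p i ^ n)" using F(5) by blast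
  define q where "q = (real t - 1) / (real n - 1)"
  have n2: "n \<ge> 2" using False n by simp
  have q: "q \<ge> 1" using n2 n by (simp add: q_def)
  have "((\<Sum>i\<in>S. p i *\<^sub>R (p i powr (real n - 1)))) powr q \<le> (\<Sum>i\<in>S. p i * (p i powr (real n - 1)) powr q)"
    proof (rule convex_on_sum[OF F(1,2) powr_convex[OF q]])
    show "sum p S = 1" by (rule F(3))
    show "\<And>i. i \<in> S \<Longrightarrow> 0 \<le> p i" using F4 less_imp_le by blast
    show "\<And>i. i \<in> S \<Longrightarrow> p i powr (real n - 1) \<in> {0<..}"
      using F4 by (metis greaterThan_iff less_irrefl powr_gt_zero)
  qed
  moreover have "(\<Sum>i\<in>S. p i *\<^sub>R (p i powr (real n - 1))) = (\<Sum>i\<in>S. p i ^ n)"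
  proof (rule sum.cong[OF refl])
    fix i assume i: "i \<in> S"
    have "p i powr real n = p i powr (1 + (real n - 1))" by simp
    also have "\<dots> = p i powr 1 * p i powr (real n - 1)" by (rule powr_add)
    also have "\<dots> = p i * p i powr (real n - 1)" using F4[OF i] by simp
    finally have "p i * p i powr (real n - 1) = p i powr real n" by simp
    then show "p i *\<^sub>R p i powr (real n - 1) = p i ^ n" using F4[OF i] by (simp add: powr_realpow)
  qed
  moreover have "(\<Sum>i\<in>S. p i * (p i powr (real n - 1)) powr q) = (\<Sum>i\<in>S. p i ^ t)"
  proof (rule sum.cong[OF refl])
    fix i assume i: "i \<in> S"
    have "(real n - 1) * q = real t - 1" using n2 by (simp add: q_def)
    then have "p i * (p i powr (real n - 1)) powr q = p i * p i powr (real t - 1)"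
      using F4[OF i] by (simp add: powr_powr)
    also have "\<dots> = p i powr 1 * p i powr (real t - 1)" using F4[OF i] by simp
    also have "\<dots> = p i powr (1 + (real t - 1))" by (rule powr_add[symmetric])
    also have "\<dots> = p i powr real t" by simp
    finally show "p i * (p i powr (real n - 1)) powr q = p i ^ t" using F4[OF i] by (simp add: powr_realpow)
  qed
  ultimately have A: "(\<Sum>i<d. p i ^ n) powr q \<le> (\<Sum>i<d. p i ^ t)"
    using F5[OF n(1)] F5[of t] t by simp
  have pos: "(\<Sum>i<d. p i ^ n) > 0" using At_pos[OF pn ps n(1)] .
  have "(\<Sum>i<d. p i ^ n) = ((\<Sum>i<d. p i ^ n) powr q) powr (1/q)"
    using pos q by (simp add: powr_powr)
  also have "\<dots> \<le> (\<Sum>i<d. p i ^ t) powr (1/q)"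
    by (rule powr_mono2) (use A q in auto)
  also have "1/q = (real n - 1) / (real t - 1)" by (simp add: q_def)
  finally show ?thesis .
qed



lemma swap4:
  "(\<Sum>a\<in>A. \<Sum>b\<in>B. \<Sum>i\<in>C. \<Sum>k\<in>D. F a b i k) = (\<Sum>i\<in>C. \<Sum>k\<in>D. \<Sum>a\<in>A. \<Sum>b\<in>B. F a b i k)"
proof -
  have "(\<Sum>a\<in>A. \<Sum>b\<in>B. \<Sum>i\<in>C. \<Sum>k\<in>D. F a b i k) = (\<Sum>a\<in>A. \<Sum>i\<in>C. \<Sum>b\<in>B. \<Sum>k\<in>D. F a b i k)"
    by (rule sum.cong[OF refl], rule sum.swap)
  also have "\<dots> = (\<Sum>i\<in>C. \<Sum>a\<in>A. \<Sum>b\<in>B. \<Sum>k\<in>D. F a b i k)" by (rule sum.swap)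
  also have "\<dots> = (\<Sum>i\<in>C. \<Sum>a\<in>A. \<Sum>k\<in>D. \<Sum>b\<in>B. F a b i k)"
    by (intro sum.cong refl sum.swap)
  also have "\<dots> = (\<Sum>i\<in>C. \<Sum>k\<in>D. \<Sum>a\<in>A. \<Sum>b\<in>B. F a b i k)"
    by (intro sum.cong refl sum.swap)
  finally show ?thesis .
qed

lemma trace_step1:
  fixes \<pi> \<sigma> :: "nat \<Rightarrow> nat" and t :: nat
  assumes pp: "\<pi> permutes {..<t}" and sp: "\<sigma> permutes {..<t}"
  shows "trace_perm_proj d t \<pi> \<sigma> \<psi> = (\<Sum>a\<in>PiE {..<t} (\<lambda>_. {..<d}). \<Sum>b\<in>PiE {..<t} (\<lambda>_. {..<d}).
     \<Prod>j<t. \<psi> (a (\<pi> j)) (b (\<sigma> j)) * cnj (\<psi> (a j) (b j)))"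
proof -
  define I where "I = PiE {..<t} (\<lambda>_. {..<d})"
  have idx: "idx t d = I" by (simp add: idx_def I_def atLeast0LessThan)
  have finI: "finite I" by (simp add: I_def finite_PiE)
  have inner: "(\<Sum>y\<in>I \<times> I. perm_op t \<pi> a (fst y) * perm_op t \<sigma> b (snd y) * proj_tensor_power t \<psi> y (a, b))
     = (\<Prod>j<t. \<psi> (a (\<pi> j)) (b (\<sigma> j)) * cnj (\<psi> (a j) (b j)))" if ab: "a \<in> I" "b \<in> I" for a b
  proof -
    define ya where "ya = restrict (a \<circ> \<pi>) {0..<t}"
    define yb where "yb = restrict (b \<circ> \<sigma>) {0..<t}"
    have yI: "(ya, yb) \<in> I \<times> I"
      using ab permutes_in_image[OF pp] permutes_in_image[OF sp]
      by (auto simp: ya_def yb_def I_def PiE_def Pi_def)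
    have "(\<Sum>y\<in>I \<times> I. perm_op t \<pi> a (fst y) * perm_op t \<sigma> b (snd y) * proj_tensor_power t \<psi> y (a, b))
       = (\<Sum>y\<in>I \<times> I. if y = (ya, yb) then proj_tensor_power t \<psi> y (a, b) else 0)"
      by (intro sum.cong refl) (auto simp: perm_op_def ya_def yb_def)
    also have "\<dots> = proj_tensor_power t \<psi> (ya, yb) (a, b)" using yI finI by simp
    also have "\<dots> = (\<Prod>j<t. \<psi> (a (\<pi> j)) (b (\<sigma> j)) * cnj (\<psi> (a j) (b j)))"
      unfolding proj_tensor_power_def by (intro prod.cong refl) (auto simp: ya_def yb_def)
    finally show ?thesis .
  qed
  have "trace_perm_proj d t \<pi> \<sigma> \<psi> = (\<Sum>x\<in>I \<times> I. \<Prod>j<t. \<psi> (fst x (\<pi> j)) (snd x (\<sigma> j)) * cnj (\<psi> (fst x j) (snd x j)))"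
    unfolding trace_perm_proj_def idx
    by (intro sum.cong refl) (auto simp: inner)
  also have "\<dots> = (\<Sum>a\<in>I. \<Sum>b\<in>I. \<Prod>j<t. \<psi> (a (\<pi> j)) (b (\<sigma> j)) * cnj (\<psi> (a j) (b j)))"
    by (simp add: sum.cartesian_product split_beta)
  finally show ?thesis by (simp add: I_def)
qed

lemma trace_formula:
  fixes d t :: nat and p :: "nat \<Rightarrow> real" and u v :: "nat \<Rightarrow> nat \<Rightarrow> complex"
    and \<psi> :: "nat \<Rightarrow> nat \<Rightarrow> complex" and \<pi> \<sigma> :: "nat \<Rightarrow> nat"
  assumes p_nonneg: "\<And>i. i < d \<Longrightarrow> p i \<ge> 0"
    and u_on: "\<And>i j. i < d \<Longrightarrow> j < d \<Longrightarrow> (\<Sum>a<d. cnj (u i a) * u j a) = (if i = j then 1 else 0)"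
    and v_on: "\<And>i j. i < d \<Longrightarrow> j < d \<Longrightarrow> (\<Sum>b<d. cnj (v i b) * v j b) = (if i = j then 1 else 0)"
    and schmidt: "\<And>a b. \<psi> a b = (\<Sum>i<d. complex_of_real (sqrt (p i)) * u i a * v i b)"
    and pp: "\<pi> permutes {..<t}" and sp: "\<sigma> permutes {..<t}"
  shows "trace_perm_proj d t \<pi> \<sigma> \<psi> = complex_of_real
     (\<Sum>k\<in>PiE {..<t} (\<lambda>_. {..<d}). if \<forall>j<t. k ((\<sigma> \<circ> inv \<pi>) j) = k j then \<Prod>j<t. p (k j) else 0)"
proof -
  define I where "I = PiE {..<t} (\<lambda>_. {..<d})"
  have finI: "finite I" by (simp add: I_def finite_PiE)
  define s where "s = (\<lambda>i. complex_of_real (sqrt (p i)))"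
  have cs: "cnj (s i) = s i" for i by (simp add: s_def)
  define W where "W = (\<lambda>i k. \<Prod>j<t. s (i j) * s (k j))"
  define UA where "UA = (\<lambda>i k (a::nat\<Rightarrow>nat). \<Prod>j<t. u (i j) (a (\<pi> j)) * cnj (u (k j) (a j)))"
  define VB where "VB = (\<lambda>i k (b::nat\<Rightarrow>nat). \<Prod>j<t. v (i j) (b (\<sigma> j)) * cnj (v (k j) (b j)))"
  have expand: "(\<Prod>j<t. \<psi> (a (\<pi> j)) (b (\<sigma> j)) * cnj (\<psi> (a j) (b j)))
     = (\<Sum>i\<in>I. \<Sum>k\<in>I. W i k * UA i k a * VB i k b)" for a b
  proof -
    have P1: "(\<Prod>j<t. \<psi> (a (\<pi> j)) (b (\<sigma> j))) = (\<Sum>i\<in>I. \<Prod>j<t. s (i j) * u (i j) (a (\<pi> j)) * v (i j) (b (\<sigma> j)))"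
      unfolding schmidt s_def I_def by (rule prod_sum_PiE) auto
    have P2: "(\<Prod>j<t. cnj (\<psi> (a j) (b j))) = (\<Sum>k\<in>I. \<Prod>j<t. s (k j) * cnj (u (k j) (a j)) * cnj (v (k j) (b j)))"
    proof -
      have "(\<Prod>j<t. cnj (\<psi> (a j) (b j))) = (\<Prod>j<t. \<Sum>i<d. s i * cnj (u i (a j)) * cnj (v i (b j)))"
        unfolding schmidt by (simp add: s_def)
      also have "\<dots> = (\<Sum>k\<in>I. \<Prod>j<t. s (k j) * cnj (u (k j) (a j)) * cnj (v (k j) (b j)))"
        unfolding I_def by (rule prod_sum_PiE) auto
      finally show ?thesis .
    qed
    have "(\<Prod>j<t. \<psi> (a (\<pi> j)) (b (\<sigma> j)) * cnj (\<psi> (a j) (b j)))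
       = (\<Prod>j<t. \<psi> (a (\<pi> j)) (b (\<sigma> j))) * (\<Prod>j<t. cnj (\<psi> (a j) (b j)))"
      by (rule prod.distrib)
    also have "\<dots> = (\<Sum>i\<in>I. \<Sum>k\<in>I. (\<Prod>j<t. s (i j) * u (i j) (a (\<pi> j)) * v (i j) (b (\<sigma> j)))
        * (\<Prod>j<t. s (k j) * cnj (u (k j) (a j)) * cnj (v (k j) (b j))))"
      unfolding P1 P2 by (rule sum_product)
    also have "\<dots> = (\<Sum>i\<in>I. \<Sum>k\<in>I. W i k * UA i k a * VB i k b)"
    proof (intro sum.cong refl)
      fix i k
      show "(\<Prod>j<t. s (i j) * u (i j) (a (\<pi> j)) * v (i j) (b (\<sigma> j)))
        * (\<Prod>j<t. s (k j) * cnj (u (k j) (a j)) * cnj (v (k j) (b j))) = W i k * UA i k a * VB i k b"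
        unfolding W_def UA_def VB_def prod.distrib[symmetric] by (intro prod.cong refl) (simp add: ac_simps)
    qed
    finally show ?thesis .
  qed
  have orthA: "(\<Sum>a\<in>I. UA i k a) = (if \<forall>j<t. k j = i (inv \<pi> j) then 1 else 0)" if "i \<in> I" "k \<in> I" for i k
    unfolding UA_def I_def by (rule orth_sum[OF u_on pp]) (use that in \<open>auto simp: I_def\<close>)
  have orthB: "(\<Sum>b\<in>I. VB i k b) = (if \<forall>j<t. k j = i (inv \<sigma> j) then 1 else 0)" if "i \<in> I" "k \<in> I" for i k
    unfolding VB_def I_def by (rule orth_sum[OF v_on sp]) (use that in \<open>auto simp: I_def\<close>)
  have "trace_perm_proj d t \<pi> \<sigma> \<psi> = (\<Sum>a\<in>I. \<Sum>b\<in>I. \<Sum>i\<in>I. \<Sum>k\<in>I. W i k * UA i k a * VB i k b)"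
    unfolding trace_step1[OF pp sp] I_def[symmetric] expand ..
  also have "\<dots> = (\<Sum>i\<in>I. \<Sum>k\<in>I. \<Sum>a\<in>I. \<Sum>b\<in>I. W i k * UA i k a * VB i k b)" by (rule swap4)
  also have "\<dots> = (\<Sum>i\<in>I. \<Sum>k\<in>I. W i k * (\<Sum>a\<in>I. UA i k a) * (\<Sum>b\<in>I. VB i k b))"
  proof (intro sum.cong refl)
    fix i k
    have "W i k * (\<Sum>a\<in>I. UA i k a) * (\<Sum>b\<in>I. VB i k b) = W i k * ((\<Sum>a\<in>I. UA i k a) * (\<Sum>b\<in>I. VB i k b))"
      by (simp add: mult.assoc)
    also have "\<dots> = W i k * (\<Sum>a\<in>I. \<Sum>b\<in>I. UA i k a * VB i k b)" by (simp add: sum_product)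
    also have "\<dots> = (\<Sum>a\<in>I. \<Sum>b\<in>I. W i k * UA i k a * VB i k b)"
      by (simp add: sum_distrib_left mult.assoc)
    finally show "(\<Sum>a\<in>I. \<Sum>b\<in>I. W i k * UA i k a * VB i k b) = W i k * (\<Sum>a\<in>I. UA i k a) * (\<Sum>b\<in>I. VB i k b)" by simp
  qed
  also have "\<dots> = (\<Sum>i\<in>I. \<Sum>k\<in>I. W i k * (if \<forall>j<t. k j = i (inv \<pi> j) then 1 else 0)
       * (if \<forall>j<t. k j = i (inv \<sigma> j) then 1 else 0))"
    by (intro sum.cong refl) (simp add: orthA orthB)
  also have "\<dots> = (\<Sum>k\<in>I. \<Sum>i\<in>I. W i k * (if \<forall>j<t. k j = i (inv \<pi> j) then 1 else 0)
       * (if \<forall>j<t. k j = i (inv \<sigma> j) then 1 else 0))" by (rule sum.swap)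
  also have "\<dots> = (\<Sum>k\<in>I. complex_of_real (if \<forall>j<t. k ((\<sigma> \<circ> inv \<pi>) j) = k j then \<Prod>j<t. p (k j) else 0))"
  proof (rule sum.cong[OF refl])
    fix k assume k: "k \<in> I"
    define i0 where "i0 = restrict (k \<circ> \<pi>) {..<t}"
    have pil: "\<pi> j < t" if "j < t" for j using permutes_in_image[OF pp] that by auto
    have ipil: "inv \<pi> j < t" if "j < t" for j using permutes_in_image[OF permutes_inv[OF pp]] that by auto
    have isl: "inv \<sigma> j < t" if "j < t" for j using permutes_in_image[OF permutes_inv[OF sp]] that by auto
    have sl: "\<sigma> j < t" if "j < t" for j using permutes_in_image[OF sp] that by auto
    have i0I: "i0 \<in> I" using k pil by (auto simp: i0_def I_def)
    have iff: "(\<forall>j<t. k j = i (inv \<pi> j)) \<longleftrightarrow> i = i0" if i: "i \<in> I" for i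
    proof
      assume H: "\<forall>j<t. k j = i (inv \<pi> j)"
      show "i = i0"
      proof
        fix j show "i j = i0 j"
        proof (cases "j < t")
          case True
          then have "k (\<pi> j) = i (inv \<pi> (\<pi> j))" using H pil by blast
          then show ?thesis using True permutes_inverses(2)[OF pp] by (simp add: i0_def)
        next
          case False then show ?thesis using i by (auto simp: i0_def I_def PiE_def extensional_def)
        qed
      qed
    next
      assume "i = i0"
      then show "\<forall>j<t. k j = i (inv \<pi> j)"
        using ipil permutes_inverses(1)[OF pp] by (simp add: i0_def)
    qed
    have "(\<Sum>i\<in>I. W i k * (if \<forall>j<t. k j = i (inv \<pi> j) then 1 else 0)
       * (if \<forall>j<t. k j = i (inv \<sigma> j) then 1 else 0))
       = (\<Sum>i\<in>I. if i = i0 then W i0 k * (if \<forall>j<t. k j = i0 (inv \<sigma> j) then 1 else 0) else 0)"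
      by (intro sum.cong refl) (simp add: iff)
    also have "\<dots> = W i0 k * (if \<forall>j<t. k j = i0 (inv \<sigma> j) then 1 else 0)"
      using i0I finI by simp
    also have "W i0 k = complex_of_real (\<Prod>j<t. p (k j))"
    proof -
      have bp: "bij_betw \<pi> {..<t} {..<t}" using permutes_imp_bij[OF pp] .
      have "W i0 k = (\<Prod>j<t. s (k (\<pi> j))) * (\<Prod>j<t. s (k j))"
        unfolding W_def prod.distrib[symmetric] by (intro prod.cong refl) (simp add: i0_def)
      also have "(\<Prod>j<t. s (k (\<pi> j))) = (\<Prod>j<t. s (k j))"
        using prod.reindex_bij_betw[OF bp, of "\<lambda>j. s (k j)"] by simp
      also have "(\<Prod>j<t. s (k j)) * (\<Prod>j<t. s (k j)) = (\<Prod>j<t. s (k j) * s (k j))"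
        by (rule prod.distrib[symmetric])
      also have "\<dots> = (\<Prod>j<t. complex_of_real (p (k j)))"
      proof (intro prod.cong refl)
        fix j assume "j \<in> {..<t}"
        then have "p (k j) \<ge> 0" using k p_nonneg by (auto simp: I_def)
        then show "s (k j) * s (k j) = complex_of_real (p (k j))"
          by (simp add: s_def of_real_mult[symmetric])
      qed
      finally show ?thesis by simp
    qed
    also have "(\<forall>j<t. k j = i0 (inv \<sigma> j)) \<longleftrightarrow> (\<forall>j<t. k ((\<sigma> \<circ> inv \<pi>) j) = k j)"
    proof
      assume H: "\<forall>j<t. k j = i0 (inv \<sigma> j)"
      show "\<forall>j<t. k ((\<sigma> \<circ> inv \<pi>) j) = k j"
      proof (intro allI impI)
        fix j assume j: "j < t"
        have "k (\<sigma> (inv \<pi> j)) = i0 (inv \<sigma> (\<sigma> (inv \<pi> j)))" using H sl ipil j by blast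
        also have "\<dots> = k j" using j ipil permutes_inverses(1,2)[OF pp] permutes_inverses(2)[OF sp]
          by (simp add: i0_def)
        finally show "k ((\<sigma> \<circ> inv \<pi>) j) = k j" by simp
      qed
    next
      assume H: "\<forall>j<t. k ((\<sigma> \<circ> inv \<pi>) j) = k j"
      show "\<forall>j<t. k j = i0 (inv \<sigma> j)"
      proof (intro allI impI)
        fix j assume j: "j < t"
        have "k ((\<sigma> \<circ> inv \<pi>) (\<pi> (inv \<sigma> j))) = k (\<pi> (inv \<sigma> j))" using H pil isl j by blast
        then show "k j = i0 (inv \<sigma> j)" using j isl permutes_inverses(2)[OF pp] permutes_inverses(1)[OF sp]
          by (simp add: i0_def)
      qed
    qed
    finally have X: "(\<Sum>i\<in>I. W i k * (if \<forall>j<t. k j = i (inv \<pi> j) then 1 else 0)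
       * (if \<forall>j<t. k j = i (inv \<sigma> j) then 1 else 0)) = complex_of_real (\<Prod>j<t. p (k j)) * (if \<forall>j<t. k ((\<sigma> \<circ> inv \<pi>) j) = k j then 1 else 0)" .
    show "(\<Sum>i\<in>I. W i k * (if \<forall>j<t. k j = i (inv \<pi> j) then 1 else 0)
       * (if \<forall>j<t. k j = i (inv \<sigma> j) then 1 else 0)) =
       complex_of_real (if \<forall>j<t. k ((\<sigma> \<circ> inv \<pi>) j) = k j then \<Prod>j<t. p (k j) else 0)"
      unfolding X by auto
  qed
  also have "\<dots> = complex_of_real (\<Sum>k\<in>I. if \<forall>j<t. k ((\<sigma> \<circ> inv \<pi>) j) = k j then \<Prod>j<t. p (k j) else 0)"
    by (rule of_real_sum[symmetric])
  finally show ?thesis by (simp add: I_def)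
qed



theorem proposition20:
  fixes d t :: nat and p :: "nat \<Rightarrow> real" and u v :: "nat \<Rightarrow> nat \<Rightarrow> complex"
    and \<psi> :: "nat \<Rightarrow> nat \<Rightarrow> complex" and \<pi> \<sigma> :: "nat \<Rightarrow> nat"
  assumes "d \<ge> 1" and "t \<ge> 2"
    and p_nonneg: "\<And>i. i < d \<Longrightarrow> p i \<ge> 0"
    and p_sum: "(\<Sum>i<d. p i) = 1"
    and u_on: "\<And>i j. i < d \<Longrightarrow> j < d \<Longrightarrow> (\<Sum>a<d. cnj (u i a) * u j a) = (if i = j then 1 else 0)"
    and v_on: "\<And>i j. i < d \<Longrightarrow> j < d \<Longrightarrow> (\<Sum>b<d. cnj (v i b) * v j b) = (if i = j then 1 else 0)"
    and schmidt: "\<And>a b. \<psi> a b = (\<Sum>i<d. complex_of_real (sqrt (p i)) * u i a * v i b)"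
    and "\<pi> permutes {0..<t}" and "\<sigma> permutes {0..<t}"
  shows "trace_perm_proj d t \<pi> \<sigma> \<psi> = complex_of_real (chi d p t (\<sigma> \<circ> inv \<pi>))
    \<and> d_alpha d p 0 powr (real (card (perm_cycles t (\<sigma> \<circ> inv \<pi>))) - real t) \<le> chi d p t (\<sigma> \<circ> inv \<pi>)
    \<and> chi d p t (\<sigma> \<circ> inv \<pi>) \<le> d_alpha d p (real t) powr (real (card (perm_cycles t (\<sigma> \<circ> inv \<pi>))) - real t)"
proof -
  have pp: "\<pi> permutes {..<t}" and sp: "\<sigma> permutes {..<t}"
    using assms(8,9) by (simp_all add: atLeast0LessThan)
  define \<beta> where "\<beta> = \<sigma> \<circ> inv \<pi>"
  have bp: "\<beta> permutes {..<t}" unfolding \<beta>_def by (rule permutes_compose[OF permutes_inv[OF pp] sp])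
  interpret permloc \<beta> t by standard (rule bp)
  define C where "C = perm_cycles t \<beta>"
  define A where "A = (\<lambda>n. \<Sum>i<d. p i ^ n)"
  have finC: "finite C" by (simp add: C_def perm_cycles_def)
  have cardc: "1 \<le> card c \<and> card c \<le> t" if "c \<in> C" for c
  proof -
    have "c \<in> orbit \<beta> ` {..<t}" using that by (simp add: C_def perm_cycles_def atLeast0LessThan)
    then obtain x where x: "x < t" "c = orbit \<beta> x" by blast
    have "card c \<le> card {..<t}" using x orb_sub by (intro card_mono) auto
    moreover have "card c \<ge> 1" using x orb_fin orbit_nonempty
      by (metis One_nat_def Suc_leI card_gt_0_iff)
    ultimately show ?thesis by simp
  qed
  have chi: "chi d p t \<beta> = (\<Prod>c\<in>C. A (card c))" by (simp add: chi_def C_def A_def)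
  have sumc: "(\<Sum>c\<in>C. real (card c)) = real t"
    using sum_card by (simp add: C_def flip: of_nat_sum)
  define k where "k = real (card C)"
  have kc: "k = (\<Sum>c\<in>C. 1)" by (simp add: k_def)
  have part1: "trace_perm_proj d t \<pi> \<sigma> \<psi> = complex_of_real (chi d p t \<beta>)"
    using trace_formula[OF p_nonneg u_on v_on schmidt pp sp, folded \<beta>_def]
    unfolding cycles_sum chi_def .
  define r where "r = real (card {i\<in>{0..<d}. p i \<noteq> 0})"
  have r: "r > 0"
  proof -
    note F = supp_facts[OF p_nonneg p_sum refl]
    then show ?thesis by (simp add: r_def card_gt_0_iff)
  qed
  have d0: "d_alpha d p 0 = r" using r by (simp add: d_alpha_def renyi_def r_def)
  have part2: "r powr (k - real t) \<le> (\<Prod>c\<in>C. A (card c))"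
  proof -
    have "k - real t = (\<Sum>c\<in>C. 1 - real (card c))"
      by (simp add: kc sumc sum_subtractf)
    then have "r powr (k - real t) = (\<Prod>c\<in>C. r powr (1 - real (card c)))"
      using r by (simp add: powr_sum)
    also have "\<dots> \<le> (\<Prod>c\<in>C. A (card c))"
      using cardc lower_ineq[OF p_nonneg p_sum] by (intro prod_mono) (auto simp: A_def r_def)
    finally show ?thesis .
  qed
  define X where "X = A t"
  have X: "X > 0" unfolding X_def A_def using At_pos[OF p_nonneg p_sum] assms(2) by simp
  have sX: "(\<Sum>i<d. p i powr real t) = X"
    unfolding X_def A_def
  proof (intro sum.cong refl)
    fix i assume "i \<in> {..<d}"
    then have "p i \<ge> 0" using p_nonneg by simp
    then show "p i powr real t = p i ^ t" using assms(2)
      by (cases "p i = 0") (auto simp: powr_realpow)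
  qed
  have dt: "d_alpha d p (real t) = X powr (1 / (1 - real t))"
  proof -
    have "d_alpha d p (real t) = 2 powr (log 2 X * (1 / (1 - real t)))"
      using assms(2) by (simp add: d_alpha_def renyi_def sX mult.commute)
    also have "\<dots> = (2 powr log 2 X) powr (1 / (1 - real t))" by (simp add: powr_powr)
    also have "\<dots> = X powr (1 / (1 - real t))" using X by simp
    finally show ?thesis .
  qed
  have part3: "(\<Prod>c\<in>C. A (card c)) \<le> (X powr (1 / (1 - real t))) powr (k - real t)"
  proof -
    have e: "1 / (1 - real t) * (k - real t) = (\<Sum>c\<in>C. (real (card c) - 1) / (real t - 1))"
    proof -
      have "(\<Sum>c\<in>C. (real (card c) - 1) / (real t - 1)) = (real t - k) / (real t - 1)"
        by (simp add: sum_divide_distrib[symmetric] sum_subtractf sumc kc)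
      also have "\<dots> = 1 / (1 - real t) * (k - real t)" using assms(2) by (simp add: field_simps)
      finally show ?thesis by simp
    qed
    have "(X powr (1 / (1 - real t))) powr (k - real t) = (\<Prod>c\<in>C. X powr ((real (card c) - 1) / (real t - 1)))"
    proof -
      have "(X powr (1 / (1 - real t))) powr (k - real t) = X powr (1 / (1 - real t) * (k - real t))"
        by (rule powr_powr)
      also have "\<dots> = X powr (\<Sum>c\<in>C. (real (card c) - 1) / (real t - 1))" by (simp only: e)
      also have "\<dots> = (\<Prod>c\<in>C. X powr ((real (card c) - 1) / (real t - 1)))"
        using X by (simp add: powr_sum)
      finally show ?thesis .
    qed
    moreover have "(\<Prod>c\<in>C. A (card c)) \<le> (\<Prod>c\<in>C. X powr ((real (card c) - 1) / (real t - 1)))"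
      using cardc upper_ineq[OF p_nonneg p_sum _ _ assms(2)] At_pos[OF p_nonneg p_sum]
      by (intro prod_mono) (auto simp: A_def X_def less_imp_le)
    ultimately show ?thesis by simp
  qed
  show ?thesis
    using part1 part2 part3 d0 dt chi unfolding \<beta>_def C_def k_def by simp
qed


end
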